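(* Let $G$ be a $(d+1)$-colourful graph on $[1..n]$ and let $\mathcal{I}\subseteq[1..d+1]$ with $|\mathcal{I}|=3$ be such that $|X(G_\mathcal{I})|$ is a disjoint union of $2$-spheres. Then there exist distinct $i,j\in\mathcal{I}$ such that $$\kappa_{i,j}-\kappa_\mathcal{I}\leq \frac{n}{6}.$$
   Context: A $(d+1)$-colourful graph of (even) order $n$ is a bipartite $(d+1)$-regular multigraph on $[1..n]$ whose edges are coloured with colours in $[1..d+1]$ so that each vertex is incident to exactly one edge of each colour. For $\mathcal{J}\subseteq[1..d+1]$, $G_\mathcal{J}$ is the graph on $[1..n]$ keeping only the edges with colours in $\mathcal{J}$, and $\kappa_\mathcal{J}$ is its number of connected components; $\kappa_{i,j}=\kappa_{\{i,j\}}$. For $|\mathcal{I}|=3$, $X(G_\mathcal{I})$ is the $2$-dimensional complex obtained by taking a triangle with vertices coloured by the three colours of $\mathcal{I}$ for each vertex of $G$, and for each edge $\{u,v\}$ of $G_\mathcal{I}$ of colour $i$ gluing the sides of the triangles of $u$ and $v$ whose endpoints are coloured $\mathcal{I}\setminus\{i\}$ by the colour-preserving isometry. *)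

theory Defs
  imports "HOL-Analysis.Analysis"
begin

text \<open>A (d+1)-colourful graph of order n on the vertex set {1..n}: for each colour
  c in {1..d+1}, the edges of colour c form a perfect matching, encoded by the
  partner function m c (a fixed-point-free involution of {1..n}); the multigraph
  (union of all colours) is bipartite.\<close>
definition colourful :: "nat \<Rightarrow> nat \<Rightarrow> (nat \<Rightarrow> nat \<Rightarrow> nat) \<Rightarrow> bool" where
  "colourful d n m \<longleftrightarrow>
     (\<forall>c\<in>{1..d+1}. \<forall>v\<in>{1..n}. m c v \<in> {1..n} \<and> m c v \<noteq> v \<and> m c (m c v) = v) \<and>
     (\<exists>S. \<forall>c\<in>{1..d+1}. \<forall>v\<in>{1..n}. (v \<in> S \<longleftrightarrow> m c v \<notin> S))"

definition edge_rel :: "nat \<Rightarrow> (nat \<Rightarrow> nat \<Rightarrow> nat) \<Rightarrow> nat set \<Rightarrow> (nat \<times> nat) set" where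
  "edge_rel n m J = {(v, m c v) | v c. v \<in> {1..n} \<and> c \<in> J}"

definition kappa :: "nat \<Rightarrow> (nat \<Rightarrow> nat \<Rightarrow> nat) \<Rightarrow> nat set \<Rightarrow> nat" where
  "kappa n m J = card ({1..n} // (edge_rel n m J)\<^sup>*)"

definition quotient_top :: "'a topology \<Rightarrow> ('a \<times> 'a) set \<Rightarrow> 'a set topology" where
  "quotient_top X r = topology (\<lambda>U. U \<subseteq> topspace X // r \<and> openin X (\<Union>U))"

text \<open>The triangle with vertices coloured by the colours in I, in barycentric
  coordinates (indexed by colours); its vertex coloured c is the point with
  coordinate 1 at c.\<close>
definition triangle :: "nat set \<Rightarrow> (nat \<Rightarrow> real) set" where
  "triangle I = {p. (\<forall>c. 0 \<le> p c) \<and> (\<forall>c. c \<notin> I \<longrightarrow> p c = 0) \<and> sum p I = 1}"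

definition triangles_space :: "nat \<Rightarrow> nat set \<Rightarrow> (nat \<times> (nat \<Rightarrow> real)) topology" where
  "triangles_space n I = subtopology (prod_topology (discrete_topology {1..n}) euclidean)
                            ({1..n} \<times> triangle I)"

text \<open>Gluing: for an edge {u, m i u} of colour i in I, the sides of the triangles of
  u and m i u opposite to the vertex coloured i (i.e. the points with p i = 0) are
  identified by the colour-preserving isometry, which is the identity in
  barycentric coordinates.\<close>
definition glue_rel :: "nat \<Rightarrow> (nat \<Rightarrow> nat \<Rightarrow> nat) \<Rightarrow> nat set
                       \<Rightarrow> ((nat \<times> (nat \<Rightarrow> real)) \<times> (nat \<times> (nat \<Rightarrow> real))) set" where
  "glue_rel n m I = {((u, p), (m i u, p)) | u p i. u \<in> {1..n} \<and> i \<in> I \<and> p \<in> triangle I \<and> p i = 0}"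

definition complex_X :: "nat \<Rightarrow> (nat \<Rightarrow> nat \<Rightarrow> nat) \<Rightarrow> nat set
                         \<Rightarrow> (nat \<times> (nat \<Rightarrow> real)) set topology" where
  "complex_X n m I = quotient_top (triangles_space n I)
      ((glue_rel n m I \<union> (glue_rel n m I)\<inverse>)\<^sup>*)"

definition disjoint_union_of_2spheres :: "'a topology \<Rightarrow> bool" where
  "disjoint_union_of_2spheres X \<longleftrightarrow>
     (\<forall>C \<in> connected_components_of X.
        subtopology X C homeomorphic_space top_of_set (sphere (0::real^3) 1))"

end

theory Submission
  imports Defs
begin


definition Kc :: "'a set \<Rightarrow> ('a\<times>'a) set \<Rightarrow> nat" where
  "Kc V E = card (V // E\<^sup>*)"

lemma quot_img: "V // R = (\<lambda>z. R``{z}) ` V"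
  by (auto simp: quotient_def)

lemma rtr_closed:
  assumes "\<forall>x\<in>A. \<forall>y. (x,y) \<in> E \<longrightarrow> y \<in> A" "(x,y) \<in> E\<^sup>*" "x \<in> A"
  shows "y \<in> A"
  using assms(2,3) by (induction rule: rtrancl_induct) (use assms(1) in auto)

lemma cls_eq:
  assumes "sym E" "(x,z) \<in> E\<^sup>*"
  shows "E\<^sup>*``{z} = E\<^sup>*``{x}"
proof -
  have s: "sym (E\<^sup>*)" using assms(1) by (simp add: sym_rtrancl)
  have "(z,x) \<in> E\<^sup>*" using s assms(2) by (meson symD)
  then show ?thesis using assms(2) by (auto intro: rtrancl_trans)
qed

lemma add_edge:
  assumes "finite V" "E \<subseteq> V\<times>V" "sym E" "x\<in>V" "y\<in>V"
  shows "Kc V E = Kc V (E \<union> {(x,y),(y,x)}) + (if (x,y) \<in> E\<^sup>* then 0 else 1)"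
proof -
  define R where "R = E\<^sup>*"
  define E' where "E' = E \<union> {(x,y),(y,x)}"
  define R' where "R' = E'\<^sup>*"
  have symR: "sym R" unfolding R_def using assms(3) by (simp add: sym_rtrancl)
  show ?thesis
  proof (cases "(x,y) \<in> R")
    case True
    have "(y,x) \<in> R" using True symR by (meson symD)
    then have "E' \<subseteq> R" using True unfolding E'_def R_def by auto
    then have "R' \<subseteq> R" unfolding R'_def R_def
      by (metis rtrancl_idemp rtrancl_subset_rtrancl)
    moreover have "R \<subseteq> R'" unfolding R_def R'_def E'_def by (rule rtrancl_mono) auto
    ultimately show ?thesis using True unfolding Kc_def R_def R'_def E'_def by auto
  next
    case False
    define A where "A = R``{x}"
    define B where "B = R``{y}"
    have xA: "x \<in> A" and yB: "y \<in> B" unfolding A_def B_def R_def by auto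
    have yA: "y \<notin> A" using False unfolding A_def by auto
    have AB: "A \<noteq> B" using yA yB by auto
    have classA: "R``{z} = A" if "z \<in> A" for z
      using cls_eq[OF assms(3)] that unfolding A_def R_def by auto
    have classB: "R``{z} = B" if "z \<in> B" for z
      using cls_eq[OF assms(3)] that unfolding B_def R_def by auto
    have RR': "R \<subseteq> R'" unfolding R_def R'_def E'_def by (rule rtrancl_mono) auto
    have xyR': "(x,y) \<in> R'" "(y,x) \<in> R'" unfolding R'_def E'_def by auto
    have R'eq: "R' = R \<union> (A\<union>B)\<times>(A\<union>B)"
    proof
      show "R' \<subseteq> R \<union> (A\<union>B)\<times>(A\<union>B)"
      proof (rule subrelI)
        fix p q assume "(p,q) \<in> R'"
        then have "(p,q) \<in> E'\<^sup>*" unfolding R'_def .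
        then show "(p,q) \<in> R \<union> (A\<union>B)\<times>(A\<union>B)"
        proof (induction rule: rtrancl_induct)
          case base then show ?case unfolding R_def by auto
        next
          case (step q r)
          from step.IH show ?case
          proof
            assume pq: "(p,q) \<in> R"
            show ?thesis
            proof (cases "(q,r) \<in> E")
              case True then show ?thesis using pq unfolding R_def
                by (meson UnI1 rtrancl.rtrancl_into_rtrancl)
            next
              case False
              then have "(q,r) = (x,y) \<or> (q,r) = (y,x)" using step.hyps(2) unfolding E'_def by auto
              then have qr: "q \<in> {x,y}" "r \<in> {x,y}" by auto
              have "(q,p) \<in> R" using pq symR by (meson symD)
              then have "p \<in> A \<union> B" using qr unfolding A_def B_def by auto
              then show ?thesis using qr xA yB by auto
            qed
          next
            assume pq: "(p,q) \<in> (A\<union>B)\<times>(A\<union>B)"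
            have "r \<in> A \<union> B"
            proof (cases "(q,r) \<in> E")
              case True
              then have "(q,r) \<in> R" unfolding R_def by auto
              then show ?thesis using pq classA classB by auto
            next
              case False
              then show ?thesis using step.hyps(2) xA yB unfolding E'_def by auto
            qed
            then show ?thesis using pq by auto
          qed
        qed
      qed
    next
      have "(A\<union>B)\<times>(A\<union>B) \<subseteq> R'"
      proof (rule subrelI)
        fix p q assume pq: "(p,q) \<in> (A\<union>B)\<times>(A\<union>B)"
        have "sym E'" unfolding E'_def using assms(3) unfolding sym_def by auto
        then have sR': "sym R'" unfolding R'_def by (simp add: sym_rtrancl)
        have pc: "(p,x) \<in> R'" if "p \<in> A \<union> B" for p
        proof -
          from that show ?thesis
          proof
            assume "p \<in> A"
            then have "(x,p) \<in> R'" using RR' unfolding A_def by auto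
            then show ?thesis using sR' by (meson symD)
          next
            assume "p \<in> B"
            then have "(y,p) \<in> R'" using RR' unfolding B_def by auto
            then have "(p,y) \<in> R'" using sR' by (meson symD)
            then show ?thesis using xyR' unfolding R'_def by (meson rtrancl_trans)
          qed
        qed
        have "(p,x) \<in> R'" "(q,x) \<in> R'" using pc pq by auto
        then show "(p,q) \<in> R'" using sR' unfolding R'_def by (meson symD rtrancl_trans)
      qed
      then show "R \<union> (A\<union>B)\<times>(A\<union>B) \<subseteq> R'" using RR' by auto
    qed
    have cls: "R'``{z} = (if z \<in> A\<union>B then A\<union>B else R``{z})" for z
    proof (cases "z \<in> A \<union> B")
      case True
      then have "R``{z} \<subseteq> A \<union> B" using classA classB by auto
      then show ?thesis using True R'eq by auto
    next
      case False then show ?thesis using R'eq by auto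
    qed
    define Q0 where "Q0 = V//R - {A,B}"
    have AQ: "A \<in> V//R" "B \<in> V//R" unfolding A_def B_def using assms(4,5) by (auto simp: quotient_def)
    have fin: "finite (V//R)" unfolding quot_img using assms(1) by simp
    have c1: "card (V//R) = card Q0 + 2"
    proof -
      have "V//R = insert A (insert B Q0)" using AQ unfolding Q0_def by auto
      moreover have "A \<notin> insert B Q0" "B \<notin> Q0" using AB unfolding Q0_def by auto
      moreover have "finite Q0" using fin unfolding Q0_def by auto
      ultimately show ?thesis by simp
    qed
    have Q0z: "z \<notin> A \<union> B" if "R``{z} \<in> Q0" "z \<in> V" for z
      using that classA classB unfolding Q0_def by auto
    have q': "V//R' = insert (A\<union>B) Q0"
    proof
      show "V//R' \<subseteq> insert (A\<union>B) Q0"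
      proof
        fix X assume "X \<in> V//R'"
        then obtain z where z: "z \<in> V" "X = R'``{z}" by (auto simp: quotient_def)
        show "X \<in> insert (A\<union>B) Q0"
        proof (cases "z \<in> A \<union> B")
          case True then show ?thesis using z cls by auto
        next
          case False
          have zz: "z \<in> R``{z}" unfolding R_def by auto
          then have "R``{z} \<noteq> A" "R``{z} \<noteq> B" using False by auto
          then show ?thesis using z cls False unfolding Q0_def by (auto simp: quotient_def)
        qed
      qed
    next
      show "insert (A\<union>B) Q0 \<subseteq> V//R'"
      proof
        fix X assume "X \<in> insert (A\<union>B) Q0"
        then show "X \<in> V//R'"
        proof
          assume "X = A \<union> B" then show ?thesis using cls[of x] xA assms(4) by (auto simp: quotient_def)
        next
          assume X: "X \<in> Q0"
          then obtain z where z: "z \<in> V" "X = R``{z}" unfolding Q0_def by (auto simp: quotient_def)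
          then have "z \<notin> A \<union> B" using Q0z X by auto
          then show ?thesis using z cls[of z] by (auto simp: quotient_def)
        qed
      qed
    qed
    have "A \<union> B \<notin> Q0"
    proof
      assume "A \<union> B \<in> Q0"
      then obtain z where z: "z \<in> V" "A \<union> B = R``{z}" unfolding Q0_def by (auto simp: quotient_def)
      then have "z \<notin> A \<union> B" using Q0z \<open>A \<union> B \<in> Q0\<close> by auto
      moreover have "z \<in> R``{z}" unfolding R_def by auto
      ultimately show False using z by auto
    qed
    then have "card (V//R') = card Q0 + 1" using q' fin unfolding Q0_def by simp
    then show ?thesis using c1 False unfolding Kc_def R_def R'_def E'_def by simp
  qed
qed




definition Pf :: "'a set \<Rightarrow> ('a \<Rightarrow> 'a) \<Rightarrow> ('a\<times>'a) set" where
  "Pf V h = {(x, h x) | x. x \<in> V}"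
definition invol :: "'a set \<Rightarrow> ('a \<Rightarrow> 'a) \<Rightarrow> bool" where
  "invol V h \<longleftrightarrow> (\<forall>x\<in>V. h x \<in> V \<and> h x \<noteq> x \<and> h (h x) = x)"
definition bip :: "'a set \<Rightarrow> 'a set \<Rightarrow> ('a \<Rightarrow> 'a) \<Rightarrow> bool" where
  "bip V S h \<longleftrightarrow> (\<forall>x\<in>V. x \<in> S \<longleftrightarrow> h x \<notin> S)"

definition Hr :: "'a set \<Rightarrow> 'a set \<Rightarrow> ('a \<Rightarrow> 'a) \<Rightarrow> ('a \<Rightarrow> 'a) \<Rightarrow> ('a\<times>'a) set" where
  "Hr V U f g = {(x, f x) | x. x \<in> V \<and> x \<notin> U \<and> f x \<notin> U} \<union> {(x, g x) | x. x \<in> V \<and> x \<notin> U \<and> g x \<notin> U}"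

primrec wk :: "('a\<Rightarrow>'a) \<Rightarrow> ('a\<Rightarrow>'a) \<Rightarrow> 'a \<Rightarrow> nat \<Rightarrow> 'a" where
  "wk f g y 0 = y"
| "wk f g y (Suc n) = (if even n then g else f) (wk f g y n)"

lemma walk:
  assumes "finite V" "invol V f" "invol V g" "bip V S f" "bip V S g"
    "y \<in> V" "y \<notin> U" "f y \<in> U" "g y \<notin> U"
  shows "\<exists>z. z \<in> V \<and> z \<notin> U \<and> z \<noteq> y \<and> (f z \<in> U \<or> g z \<in> U) \<and> (y,z) \<in> (Hr V U f g)\<^sup>*"
proof -
  let ?w = "wk f g y"
  have wV: "?w n \<in> V" for n
    by (induction n) (use assms(2,3,6) in \<open>auto simp: invol_def\<close>)
  have wS: "?w n \<in> S \<longleftrightarrow> (y \<in> S \<longleftrightarrow> even n)" for n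
  proof (induction n)
    case 0 then show ?case by simp
  next
    case (Suc n) then show ?case using wV[of n] assms(4,5) by (auto simp: bip_def)
  qed
  have bk: "(if even n then g else f) (?w (Suc n)) = ?w n" for n
    using wV[of n] assms(2,3) by (auto simp: invol_def)
  have step_back: "?w p = ?w q" if "?w (Suc p) = ?w (Suc q)" "even p = even q" for p q
  proof -
    have "(if even p then g else f) = (if even q then g else f)" using that(2) by simp
    then show ?thesis using bk[of p] bk[of q] that(1) by metis
  qed
  have to0: "?w p = ?w (p + 2*r) \<Longrightarrow> ?w 0 = ?w (2*r)" for p r
  proof (induction p)
    case 0 then show ?case by simp
  next
    case (Suc p)
    have e: "Suc p + 2*r = Suc (p + 2*r)" by simp
    have "?w (Suc p) = ?w (Suc (p + 2*r))" using Suc.prems by (metis e)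
    then have "?w p = ?w (p + 2*r)" by (rule step_back) simp
    then show ?case using Suc.IH by blast
  qed
  obtain r where r: "r \<ge> 1" "?w 0 = ?w (2*r)"
  proof -
    let ?F = "\<lambda>p. ?w (2*p)"
    have "?F ` {..card V} \<subseteq> V" using wV by auto
    then have "card (?F ` {..card V}) \<le> card V" using assms(1) by (simp add: card_mono)
    then have "\<not> inj_on ?F {..card V}" by (intro pigeonhole) simp
    then obtain p q where pq: "p \<noteq> q" "?F p = ?F q" unfolding inj_on_def by blast
    show ?thesis
    proof (cases "p < q")
      case True
      have "?w (2*p) = ?w (2*p + 2*(q-p))" using pq True by (simp add: algebra_simps)
      then have "?w 0 = ?w (2*(q-p))" using to0 by blast
      then show ?thesis using that[of "q-p"] True by simp
    next
      case False
      then have "q < p" using pq by simp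
      have "?w (2*q) = ?w (2*q + 2*(p-q))" using pq \<open>q<p\<close> by (simp add: algebra_simps)
      then have "?w 0 = ?w (2*(p-q))" using to0 by blast
      then show ?thesis using that[of "p-q"] \<open>q<p\<close> by simp
    qed
  qed
  have exU: "\<exists>n. ?w n \<in> U"
  proof
    have e: "2*r = Suc (2*r - 1)" using r by simp
    have "odd (2*r - 1)" using r by simp
    then have hf: "(if even (2*r - 1) then g else f) = f" by simp
    have s: "?w (Suc (2*r - 1)) = (if even (2*r - 1) then g else f) (?w (2*r - 1))" by (rule wk.simps(2))
    then have "?w (2*r) = f (?w (2*r - 1))" using hf e by metis
    then have "f (?w (2*r)) = ?w (2*r - 1)" using wV[of "2*r - 1"] assms(2) by (simp add: invol_def)
    then show "?w (2*r - 1) \<in> U" using r assms(8) by simp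
  qed
  define j where "j = (LEAST n. ?w n \<in> U)"
  have wj: "?w j \<in> U" unfolding j_def using exU by (meson LeastI)
  have lt: "?w t \<notin> U" if "t < j" for t using that unfolding j_def using not_less_Least by blast
  have j0: "j \<noteq> 0" using wj assms(7) by (metis wk.simps(1))
  have w1: "?w 1 = g y" by simp
  have j1: "j \<noteq> 1" using wj assms(9) w1 by metis
  have conn: "t < j \<Longrightarrow> (y, ?w t) \<in> (Hr V U f g)\<^sup>*" for t
  proof (induction t)
    case 0 then show ?case by simp
  next
    case (Suc t)
    have a1: "?w t \<notin> U" using lt Suc.prems by simp
    have a2: "?w (Suc t) \<notin> U" using lt[of "Suc t"] Suc.prems by blast
    note a = a1 a2
    have "(?w t, ?w (Suc t)) \<in> Hr V U f g" using a wV[of t] unfolding Hr_def by auto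
    then show ?case using Suc by (meson Suc_lessD rtrancl.rtrancl_into_rtrancl)
  qed
  define z where "z = ?w (j - 1)"
  have jj: "j = Suc (j - 1)" using j0 by simp
  have zU: "(if even (j-1) then g else f) z \<in> U" using wj unfolding z_def by (subst (asm) jj) simp
  have zy: "z \<noteq> y"
  proof
    assume zy: "z = y"
    show False
    proof (cases "even (j-1)")
      case True
      then have "g y \<in> U" using zU zy by simp
      then show False using assms(9) by simp
    next
      case False
      then show False using wS[of "j-1"] zy unfolding z_def by simp
    qed
  qed
  show ?thesis
    apply (rule exI[of _ z])
    using wV[of "j-1"] lt[of "j-1"] j0 zy zU conn[of "j-1"] unfolding z_def
    by (auto split: if_splits)
qed




lemma Pf_iff: "(p,q) \<in> Pf V h \<longleftrightarrow> p \<in> V \<and> q = h p"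
  by (auto simp: Pf_def)

lemma Pf_sub: "invol V h \<Longrightarrow> Pf V h \<subseteq> V\<times>V"
  by (auto simp: Pf_def invol_def)

lemma Pf_sym: "invol V h \<Longrightarrow> sym (Pf V h)"
  unfolding sym_def Pf_iff invol_def by metis

lemma se_ok: "E \<subseteq> V\<times>V \<Longrightarrow> sym E \<Longrightarrow> x \<in> V \<Longrightarrow> y \<in> V \<Longrightarrow>
    E \<union> {(x,y),(y,x)} \<subseteq> V\<times>V \<and> sym (E \<union> {(x,y),(y,x)})"
  unfolding sym_def by auto

lemma iso:
  assumes "finite W" "x \<notin> W" "E \<subseteq> W\<times>W"
  shows "Kc (insert x W) E = Kc W E + 1"
proof -
  have cx: "E\<^sup>*``{x} = {x}"
  proof -
    have "y \<in> {x}" if "(x,y) \<in> E\<^sup>*" for y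
      by (rule rtr_closed[OF _ that]) (use assms(2,3) in auto)
    then show ?thesis by auto
  qed
  have cw: "E\<^sup>*``{w} \<subseteq> W" if "w \<in> W" for w
  proof
    fix y assume "y \<in> E\<^sup>*``{w}"
    then have wy: "(w,y) \<in> E\<^sup>*" by auto
    show "y \<in> W" by (rule rtr_closed[OF _ wy]) (use assms(3) that in auto)
  qed
  have q: "insert x W // E\<^sup>* = insert {x} (W // E\<^sup>*)" by (simp add: quot_img cx)
  have n: "{x} \<notin> W // E\<^sup>*"
  proof
    assume "{x} \<in> W // E\<^sup>*"
    then obtain w where "w \<in> W" "{x} = E\<^sup>*``{w}" by (auto simp: quotient_def)
    then show False using cw assms(2) by auto
  qed
  have "finite (W // E\<^sup>*)" using assms(1) by (simp add: quot_img)
  then show ?thesis unfolding Kc_def using q n by simp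
qed

lemma dip:
  assumes "finite W" "u \<notin> W" "v \<notin> W" "u \<noteq> v" "E \<subseteq> W\<times>W" "sym E"
  shows "Kc (insert u (insert v W)) (E \<union> {(u,v),(v,u)}) = Kc W E + 1"
proof -
  let ?V = "insert u (insert v W)"
  have "(u,v) \<notin> E\<^sup>*"
  proof
    assume uv: "(u,v) \<in> E\<^sup>*"
    have "v \<in> {u}" by (rule rtr_closed[OF _ uv]) (use assms(2,5) in auto)
    then show False using assms(4) by auto
  qed
  then have "Kc ?V E = Kc ?V (E \<union> {(u,v),(v,u)}) + 1"
    using add_edge[of ?V E u v] assms by auto
  moreover have "Kc ?V E = Kc (insert v W) E + 1"
    by (rule iso) (use assms in auto)
  moreover have "Kc (insert v W) E = Kc W E + 1"
    by (rule iso) (use assms in auto)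
  ultimately show ?thesis by simp
qed

lemma inv_ne: "h (h x) = x \<Longrightarrow> x \<noteq> h t \<Longrightarrow> h x \<noteq> t" by metis

lemma dipole_fun:
  assumes "invol V h" "u \<in> V" "h u = v"
  shows "Pf V h = Pf (V - {u,v}) h \<union> {(u,v),(v,u)}" "invol (V - {u,v}) h"
proof -
  have hv: "h v = u" using assms by (auto simp: invol_def)
  have vV: "v \<in> V" using assms unfolding invol_def by metis
  show "Pf V h = Pf (V - {u,v}) h \<union> {(u,v),(v,u)}"
  proof
    show "Pf V h \<subseteq> Pf (V - {u,v}) h \<union> {(u,v),(v,u)}"
    proof (rule subrelI)
      fix p q assume "(p,q) \<in> Pf V h"
      then have pq: "p \<in> V" "q = h p" by (auto simp: Pf_iff)
      show "(p,q) \<in> Pf (V - {u,v}) h \<union> {(u,v),(v,u)}"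
      proof (cases "p = u \<or> p = v")
        case True then show ?thesis using pq assms(3) hv by auto
      next
        case False then show ?thesis using pq by (simp add: Pf_iff)
      qed
    qed
    show "Pf (V - {u,v}) h \<union> {(u,v),(v,u)} \<subseteq> Pf V h"
      using assms(2,3) hv vV by (auto simp: Pf_iff)
  qed
  show "invol (V - {u,v}) h" unfolding invol_def
  proof (intro ballI)
    fix x assume x: "x \<in> V - {u,v}"
    have hx: "h x \<in> V" "h x \<noteq> x" "h (h x) = x" using assms(1) x unfolding invol_def by auto
    have "h x \<noteq> u"
    proof
      assume "h x = u" then have "h (h x) = v" using assms(3) by simp
      then show False using hx x by simp
    qed
    moreover have "h x \<noteq> v"
    proof
      assume "h x = v" then have "h (h x) = u" using hv by simp
      then show False using hx x by simp
    qed
    ultimately show "h x \<in> V - {u,v} \<and> h x \<noteq> x \<and> h (h x) = x" using hx by simp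
  qed
qed

lemma bip_sub: "bip V S h \<Longrightarrow> W \<subseteq> V \<Longrightarrow> bip W S h"
  unfolding bip_def by blast

definition sw :: "'a \<Rightarrow> 'a \<Rightarrow> 'a \<Rightarrow> 'a \<Rightarrow> ('a \<Rightarrow> 'a) \<Rightarrow> 'a \<Rightarrow> 'a" where
  "sw u v a b h = (\<lambda>t. if t = u then v else if t = v then u else if t = a then b else if t = b then a else h t)"

lemma sw_facts:
  assumes "invol V h" "invol V g" "u \<in> V" "h u \<noteq> g u"
  shows "g u \<in> V" "h u \<in> V" "h (g u) \<in> V" "u \<noteq> g u" "h u \<noteq> u" "h (g u) \<noteq> u" "h (g u) \<noteq> g u"
    "h u \<noteq> h (g u)" "g (g u) = u" "h (h u) = u" "h (h (g u)) = g u"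
  using assms unfolding invol_def by metis+

lemma sw_u: "sw u v a b h u = v" by (simp add: sw_def)
lemma sw_v: "v \<noteq> u \<Longrightarrow> sw u v a b h v = u" by (simp add: sw_def)
lemma sw_a: "a \<noteq> u \<Longrightarrow> a \<noteq> v \<Longrightarrow> sw u v a b h a = b" by (simp add: sw_def)
lemma sw_b: "b \<noteq> u \<Longrightarrow> b \<noteq> v \<Longrightarrow> b \<noteq> a \<Longrightarrow> sw u v a b h b = a" by (simp add: sw_def)
lemma sw_o: "t \<noteq> u \<Longrightarrow> t \<noteq> v \<Longrightarrow> t \<noteq> a \<Longrightarrow> t \<noteq> b \<Longrightarrow> sw u v a b h t = h t" by (simp add: sw_def)

lemma sw_invol:
  assumes "invol V h" "invol V g" "u \<in> V" "h u \<noteq> g u"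
  shows "invol V (sw u (g u) (h u) (h (g u)) h)"
proof -
  note f = sw_facts[OF assms]
  let ?s = "sw u (g u) (h u) (h (g u)) h"
  have su: "?s u = g u" by (rule sw_u)
  have sv: "?s (g u) = u" using f by (intro sw_v) auto
  have sa: "?s (h u) = h (g u)" using f by (intro sw_a) auto
  have sb: "?s (h (g u)) = h u" using f by (intro sw_b) auto
  have hx: "h x \<in> V" "h x \<noteq> x" "h (h x) = x" if "x \<in> V" for x
    using assms(1) that unfolding invol_def by auto
  show ?thesis unfolding invol_def
  proof (intro ballI)
    fix x assume x: "x \<in> V"
    show "?s x \<in> V \<and> ?s x \<noteq> x \<and> ?s (?s x) = x"
    proof (cases "x \<in> {u, g u, h u, h (g u)}")
      case True
      then consider "x = u" | "x = g u" | "x = h u" | "x = h (g u)" by blast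
      then show ?thesis
      proof cases
        case 1 then show ?thesis using su sv f by simp
      next
        case 2 then show ?thesis using su sv f assms(3) by simp
      next
        case 3 then show ?thesis using sa sb f by simp
      next
        case 4 then show ?thesis using sa sb f by simp
      qed
    next
      case False
      then have sx: "?s x = h x" by (intro sw_o) auto
      have ne: "h x \<noteq> t" if "x \<noteq> h t" for t using that hx(3)[OF x] by metis
      have "h x \<notin> {u, g u, h u, h (g u)}"
        using ne[of u] ne[of "g u"] ne[of "h u"] ne[of "h (g u)"] False f by auto
      then have "?s (h x) = h (h x)" by (intro sw_o) auto
      then show ?thesis using sx hx[OF x] by simp
    qed
  qed
qed

lemma sw_bip:
  assumes "invol V h" "invol V g" "u \<in> V" "h u \<noteq> g u" "bip V S h" "bip V S g"
  shows "bip V S (sw u (g u) (h u) (h (g u)) h)"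
proof -
  note f = sw_facts[OF assms(1-4)]
  let ?s = "sw u (g u) (h u) (h (g u)) h"
  have su: "?s u = g u" by (rule sw_u)
  have sv: "?s (g u) = u" using f by (intro sw_v) auto
  have sa: "?s (h u) = h (g u)" using f by (intro sw_a) auto
  have sb: "?s (h (g u)) = h u" using f by (intro sw_b) auto
  have b: "x \<in> S \<longleftrightarrow> h x \<notin> S" "x \<in> S \<longleftrightarrow> g x \<notin> S" if "x \<in> V" for x
    using assms(5,6) that unfolding bip_def by auto
  show ?thesis unfolding bip_def
  proof (intro ballI)
    fix x assume x: "x \<in> V"
    show "x \<in> S \<longleftrightarrow> ?s x \<notin> S"
    proof (cases "x \<in> {u, g u, h u, h (g u)}")
      case True
      then consider "x = u" | "x = g u" | "x = h u" | "x = h (g u)" by blast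
      then show ?thesis
      proof cases
        case 1 then show ?thesis using su b(2)[OF assms(3)] by simp
      next
        case 2 then show ?thesis using sv b(2)[OF assms(3)] by metis
      next
        case 3 then show ?thesis using sa b(2)[OF assms(3)] b(1)[OF assms(3)] b(1)[OF f(1)] by metis
      next
        case 4 then show ?thesis using sb b(2)[OF assms(3)] b(1)[OF assms(3)] b(1)[OF f(1)] f(11) by metis
      qed
    next
      case False
      then have sx: "?s x = h x" by (intro sw_o) auto
      then show ?thesis using b(1)[OF x] by metis
    qed
  qed
qed




lemma ch2: "(x,y) \<in> E \<Longrightarrow> (y,z) \<in> E \<Longrightarrow> (x,z) \<in> E\<^sup>*"
  by (meson r_into_rtrancl rtrancl_into_rtrancl)
lemma ch3: "(x,y) \<in> E \<Longrightarrow> (y,z) \<in> E \<Longrightarrow> (z,w) \<in> E \<Longrightarrow> (x,w) \<in> E\<^sup>*"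
  by (meson ch2 rtrancl_into_rtrancl)
lemma ch5: "(x,y) \<in> E \<Longrightarrow> (y,z) \<in> E \<Longrightarrow> (z,w) \<in> E \<Longrightarrow> (w,s) \<in> E \<Longrightarrow> (s,t) \<in> E \<Longrightarrow> (x,t) \<in> E\<^sup>*"
  by (meson ch3 rtrancl_into_rtrancl)

lemma side:
  assumes "finite V" "invol V h" "invol V g" "u \<in> V" "h u \<noteq> g u"
  shows "Kc V (Pf V (sw u (g u) (h u) (h (g u)) h) \<union> Pf V g) = Kc V (Pf V h \<union> Pf V g) + 1"
proof -
  note f = sw_facts[OF assms(2-5)]
  have ih': "invol V (sw u (g u) (h u) (h (g u)) h)" by (rule sw_invol[OF assms(2-5)])
  define v where "v = g u"
  define a where "a = h u"
  define b where "b = h v"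
  define h' where "h' = sw u v a b h"
  have fv: "v \<in> V" "a \<in> V" "b \<in> V" "u \<noteq> v" "a \<noteq> u" "b \<noteq> u" "b \<noteq> v" "a \<noteq> b" "g v = u" "h a = u" "h b = v" "a \<noteq> v"
    using f assms(5) unfolding v_def a_def b_def by auto
  have gu: "g u = v" "h u = a" "h v = b" unfolding v_def a_def b_def by auto
  have ih: "invol V h'" using ih' unfolding h'_def v_def a_def b_def .
  have hu: "h' u = v" unfolding h'_def by (rule sw_u)
  have hv: "h' v = u" unfolding h'_def using fv by (intro sw_v) auto
  have ha: "h' a = b" unfolding h'_def using fv by (intro sw_a) auto
  have hb: "h' b = a" unfolding h'_def using fv by (intro sw_b) auto
  have ho: "h' t = h t" if "t \<noteq> u" "t \<noteq> v" "t \<noteq> a" "t \<noteq> b" for t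
    unfolding h'_def using that by (intro sw_o) auto
  define E where "E = Pf V h \<union> Pf V g"
  define E' where "E' = Pf V h' \<union> Pf V g"
  have okE: "E \<subseteq> V\<times>V" "sym E" unfolding E_def using assms(2,3)
    by (auto simp: Pf_sub Pf_sym intro: sym_Un)
  have okE': "E' \<subseteq> V\<times>V" "sym E'" unfolding E'_def using ih assms(3)
    by (auto simp: Pf_sub Pf_sym intro: sym_Un)
  have "(a,b) \<in> E\<^sup>*"
    by (rule ch3[of a u E v b]) (use fv assms(4) in \<open>auto simp: E_def Pf_iff a_def v_def b_def\<close>)
  then have k1: "Kc V E = Kc V (E \<union> {(a,b),(b,a)})"
    using add_edge[OF assms(1) okE, of a b] fv by simp
  have "(u,a) \<notin> E'\<^sup>*"
  proof
    assume ua: "(u,a) \<in> E'\<^sup>*"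
    have "a \<in> {u,v}"
      by (rule rtr_closed[OF _ ua]) (use hu hv fv assms(4) in \<open>auto simp: E'_def Pf_iff v_def\<close>)
    then show False using fv by auto
  qed
  then have k2: "Kc V E' = Kc V (E' \<union> {(u,a),(a,u)}) + 1"
    using add_edge[OF assms(1) okE', of u a] fv assms(4) by simp
  have ok2: "E' \<union> {(u,a),(a,u)} \<subseteq> V\<times>V" "sym (E' \<union> {(u,a),(a,u)})"
    using se_ok[OF okE', of u a] fv assms(4) by auto
  have "(v,b) \<in> (E' \<union> {(u,a),(a,u)})\<^sup>*"
    by (rule ch3[of v u _ a b]) (use fv ha assms(4) in \<open>auto simp: E'_def Pf_iff\<close>)
  then have k3: "Kc V (E' \<union> {(u,a),(a,u)}) = Kc V ((E' \<union> {(u,a),(a,u)}) \<union> {(v,b),(b,v)})"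
    using add_edge[OF assms(1) ok2, of v b] fv by simp
  have seq: "(E' \<union> {(u,a),(a,u)}) \<union> {(v,b),(b,v)} = E \<union> {(a,b),(b,a)}"
  proof (intro set_eqI)
    fix pq :: "'a \<times> 'a"
    obtain p q where pqd: "pq = (p,q)" by fastforce
    have L: "pq \<in> (E' \<union> {(u,a),(a,u)}) \<union> {(v,b),(b,v)} \<longleftrightarrow>
       (p \<in> V \<and> (q = h' p \<or> q = g p)) \<or> (p=u\<and>q=a) \<or> (p=a\<and>q=u) \<or> (p=v\<and>q=b) \<or> (p=b\<and>q=v)"
      unfolding pqd E'_def by (auto simp: Pf_iff)
    have R: "pq \<in> E \<union> {(a,b),(b,a)} \<longleftrightarrow>
       (p \<in> V \<and> (q = h p \<or> q = g p)) \<or> (p=a\<and>q=b) \<or> (p=b\<and>q=a)"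
      unfolding pqd E_def by (auto simp: Pf_iff)
    consider "p = u" | "p = v" | "p = a" | "p = b" | "p \<noteq> u \<and> p \<noteq> v \<and> p \<noteq> a \<and> p \<noteq> b" by blast
    then show "pq \<in> (E' \<union> {(u,a),(a,u)}) \<union> {(v,b),(b,v)} \<longleftrightarrow> pq \<in> E \<union> {(a,b),(b,a)}"
    proof cases
      case 1 then show ?thesis unfolding L R using fv hu gu assms(4) by auto
    next
      case 2 then show ?thesis unfolding L R using fv hv gu by auto
    next
      case 3 then show ?thesis unfolding L R using fv ha by auto
    next
      case 4 then show ?thesis unfolding L R using fv hb by auto
    next
      case 5 then show ?thesis unfolding L R using ho by auto
    qed
  qed
  show ?thesis using k1 k2 k3 seq unfolding E_def E'_def h'_def v_def a_def b_def by simp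
qed




definition okg :: "'a set \<Rightarrow> ('a\<times>'a) set \<Rightarrow> bool" where
  "okg V E \<longleftrightarrow> E \<subseteq> V\<times>V \<and> sym E"

lemma ae:
  assumes "finite V" "okg V E" "x \<in> V" "y \<in> V"
  shows "Kc V E = Kc V (E \<union> {(x,y),(y,x)}) + (if (x,y) \<in> E\<^sup>* then 0 else 1)"
    "okg V (E \<union> {(x,y),(y,x)})"
  using add_edge[OF assms(1) _ _ assms(3,4)] se_ok[of E V x y] assms(2-4) unfolding okg_def by auto

lemma ae_c:
  assumes "finite V" "okg V E" "x \<in> V" "y \<in> V" "(x,y) \<in> E\<^sup>*"
  shows "Kc V E = Kc V (E \<union> {(x,y),(y,x)})"
  using ae[OF assms(1-4)] assms(5) by simp

lemma ae_n:
  assumes "finite V" "okg V E" "x \<in> V" "y \<in> V" "(x,y) \<notin> E\<^sup>*"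
  shows "Kc V E = Kc V (E \<union> {(x,y),(y,x)}) + 1"
  using ae[OF assms(1-4)] assms(5) by simp

lemma okg_Pf: "invol V h \<Longrightarrow> okg V (Pf V h)"
  unfolding okg_def using Pf_sub Pf_sym by blast

lemma okg_Un: "okg V A \<Longrightarrow> okg V B \<Longrightarrow> okg V (A \<union> B)"
  unfolding okg_def by (auto intro: sym_Un)

lemma mid:
  assumes fin: "finite V" and inv: "invol V hi" "invol V hj" "invol V g"
    and bp: "bip V S hi" "bip V S hj" and uV: "u \<in> V" and ne: "hi u \<noteq> g u" "hj u \<noteq> g u"
  shows "2 * int (Kc V (Pf V (sw u (g u) (hi u) (hi (g u)) hi) \<union> Pf V (sw u (g u) (hj u) (hj (g u)) hj) \<union> Pf V g))
         + int (Kc V (Pf V hi \<union> Pf V hj))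
       \<le> int (Kc V (Pf V (sw u (g u) (hi u) (hi (g u)) hi) \<union> Pf V (sw u (g u) (hj u) (hj (g u)) hj)))
         + 2 * int (Kc V (Pf V hi \<union> Pf V hj \<union> Pf V g)) + 2"
proof -
  note fi = sw_facts[OF inv(1,3) uV ne(1)]
  note fj = sw_facts[OF inv(2,3) uV ne(2)]
  have ii': "invol V (sw u (g u) (hi u) (hi (g u)) hi)" by (rule sw_invol[OF inv(1,3) uV ne(1)])
  have ij': "invol V (sw u (g u) (hj u) (hj (g u)) hj)" by (rule sw_invol[OF inv(2,3) uV ne(2)])
  define v where "v = g u"
  define a where "a = hi u"
  define b where "b = hi v"
  define c where "c = hj u"
  define d where "d = hj v"
  define hi' where "hi' = sw u v a b hi"
  define hj' where "hj' = sw u v c d hj"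
  have gu: "g u = v" "hi u = a" "hi v = b" "hj u = c" "hj v = d"
    unfolding v_def a_def b_def c_def d_def by auto
  have fv: "v \<in> V" "a \<in> V" "b \<in> V" "c \<in> V" "d \<in> V" "u \<noteq> v"
    "a \<noteq> u" "a \<noteq> v" "b \<noteq> u" "b \<noteq> v" "a \<noteq> b"
    "c \<noteq> u" "c \<noteq> v" "d \<noteq> u" "d \<noteq> v" "c \<noteq> d"
    "g v = u" "hi a = u" "hi b = v" "hj c = u" "hj d = v"
    using fi fj ne unfolding v_def a_def b_def c_def d_def by auto
  have ii: "invol V hi'" using ii' unfolding hi'_def v_def a_def b_def .
  have ij: "invol V hj'" using ij' unfolding hj'_def v_def c_def d_def .
  have hiu: "hi' u = v" "hi' v = u" "hi' a = b" "hi' b = a"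
    unfolding hi'_def using fv by (auto intro: sw_u sw_v sw_a sw_b)
  have hju: "hj' u = v" "hj' v = u" "hj' c = d" "hj' d = c"
    unfolding hj'_def using fv by (auto intro: sw_u sw_v sw_a sw_b)
  have hiA: "hi' p = (if p = a then b else if p = b then a else hi p)" if "p \<noteq> u" "p \<noteq> v" for p
    unfolding hi'_def sw_def using that by auto
  have hjA: "hj' p = (if p = c then d else if p = d then c else hj p)" if "p \<noteq> u" "p \<noteq> v" for p
    unfolding hj'_def sw_def using that by auto
  define E where "E = Pf V hi \<union> Pf V hj \<union> Pf V g"
  define E' where "E' = Pf V hi' \<union> Pf V hj' \<union> Pf V g"
  define F where "F = Pf V hi \<union> Pf V hj"
  define F' where "F' = Pf V hi' \<union> Pf V hj'"
  have okE: "okg V E" unfolding E_def using inv by (intro okg_Un okg_Pf)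
  have okE': "okg V E'" unfolding E'_def using inv ii ij by (intro okg_Un okg_Pf)
  have okF: "okg V F" unfolding F_def using inv by (intro okg_Un okg_Pf)
  have okF': "okg V F'" unfolding F'_def using ii ij by (intro okg_Un okg_Pf)
  note P = Pf_iff
  have "(a,b) \<in> E\<^sup>*" by (rule ch3[of a u E v b]) (use fv gu uV in \<open>auto simp: E_def P\<close>)
  then have q1: "Kc V E = Kc V (E \<union> {(a,b),(b,a)})" by (intro ae_c[OF fin okE]) (use fv uV in auto)
  have ok1: "okg V (E \<union> {(a,b),(b,a)})" by (intro ae(2)[OF fin okE]) (use fv uV in auto)
  have "(c,d) \<in> (E \<union> {(a,b),(b,a)})\<^sup>*" by (rule ch3[of c u _ v d]) (use fv gu uV in \<open>auto simp: E_def P\<close>)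
  then have q2: "Kc V (E \<union> {(a,b),(b,a)}) = Kc V (E \<union> {(a,b),(b,a)} \<union> {(c,d),(d,c)})"
    by (intro ae_c[OF fin ok1]) (use fv uV in auto)
  have clE': "x \<in> {u,v}" if "(u,x) \<in> E'\<^sup>*" for x
    by (rule rtr_closed[OF _ that]) (use hiu hju fv gu uV in \<open>auto simp: E'_def P\<close>)
  have "(u,a) \<notin> E'\<^sup>*" using clE'[of a] fv by auto
  then have q3: "Kc V E' = Kc V (E' \<union> {(u,a),(a,u)}) + 1" using ae_n[OF fin okE'] fv uV by simp
  have ok3: "okg V (E' \<union> {(u,a),(a,u)})" using ae(2)[OF fin okE'] fv uV by simp
  have "(v,b) \<in> (E' \<union> {(u,a),(a,u)})\<^sup>*" by (rule ch3[of v u _ a b]) (use fv hiu uV in \<open>auto simp: E'_def P\<close>)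
  then have q4: "Kc V (E' \<union> {(u,a),(a,u)}) = Kc V (E' \<union> {(u,a),(a,u)} \<union> {(v,b),(b,v)})"
    by (intro ae_c[OF fin ok3]) (use fv uV in auto)
  have ok4: "okg V (E' \<union> {(u,a),(a,u)} \<union> {(v,b),(b,v)})" by (intro ae(2)[OF fin ok3]) (use fv uV in auto)
  define N where "N = (if (u,c) \<in> (E' \<union> {(u,a),(a,u)} \<union> {(v,b),(b,v)})\<^sup>* then 0 else 1::nat)"
  have q5: "Kc V (E' \<union> {(u,a),(a,u)} \<union> {(v,b),(b,v)}) = Kc V (E' \<union> {(u,a),(a,u)} \<union> {(v,b),(b,v)} \<union> {(u,c),(c,u)}) + N"
    unfolding N_def by (intro ae(1)[OF fin ok4]) (use fv uV in auto)
  have ok5: "okg V (E' \<union> {(u,a),(a,u)} \<union> {(v,b),(b,v)} \<union> {(u,c),(c,u)})" by (intro ae(2)[OF fin ok4]) (use fv uV in auto)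
  have "(v,d) \<in> (E' \<union> {(u,a),(a,u)} \<union> {(v,b),(b,v)} \<union> {(u,c),(c,u)})\<^sup>*"
    by (rule ch3[of v u _ c d]) (use fv hju uV in \<open>auto simp: E'_def P\<close>)
  then have q6: "Kc V (E' \<union> {(u,a),(a,u)} \<union> {(v,b),(b,v)} \<union> {(u,c),(c,u)})
      = Kc V (E' \<union> {(u,a),(a,u)} \<union> {(v,b),(b,v)} \<union> {(u,c),(c,u)} \<union> {(v,d),(d,v)})"
    by (intro ae_c[OF fin ok5]) (use fv uV in auto)
  have seq1: "E' \<union> {(u,a),(a,u)} \<union> {(v,b),(b,v)} \<union> {(u,c),(c,u)} \<union> {(v,d),(d,v)}
     = E \<union> {(a,b),(b,a)} \<union> {(c,d),(d,c)}"
  proof (intro set_eqI)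
    fix pq :: "'a \<times> 'a"
    obtain p q where pqd: "pq = (p,q)" by fastforce
    consider "p = u" | "p = v" | "p \<noteq> u \<and> p \<noteq> v" by blast
    then show "pq \<in> E' \<union> {(u,a),(a,u)} \<union> {(v,b),(b,v)} \<union> {(u,c),(c,u)} \<union> {(v,d),(d,v)} \<longleftrightarrow>
       pq \<in> E \<union> {(a,b),(b,a)} \<union> {(c,d),(d,c)}"
    proof cases
      case 1 then show ?thesis unfolding pqd E_def E'_def using fv gu hiu hju uV by (auto simp: P)
    next
      case 2 then show ?thesis unfolding pqd E_def E'_def using fv gu hiu hju uV by (auto simp: P)
    next
      case 3 then show ?thesis unfolding pqd E_def E'_def using fv hiA[of p] hjA[of p] by (auto simp: P)
    qed
  qed
  define e1 where "e1 = (if (a,b) \<in> F\<^sup>* then 0 else 1::nat)"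
  have r1: "Kc V F = Kc V (F \<union> {(a,b),(b,a)}) + e1" unfolding e1_def by (intro ae(1)[OF fin okF]) (use fv uV in auto)
  have okr1: "okg V (F \<union> {(a,b),(b,a)})" by (intro ae(2)[OF fin okF]) (use fv uV in auto)
  have "(c,d) \<in> (F \<union> {(a,b),(b,a)})\<^sup>*" by (rule ch5[of c u _ a b v d]) (use fv gu uV in \<open>auto simp: F_def P\<close>)
  then have r2: "Kc V (F \<union> {(a,b),(b,a)}) = Kc V (F \<union> {(a,b),(b,a)} \<union> {(c,d),(d,c)})"
    by (intro ae_c[OF fin okr1]) (use fv uV in auto)
  have okr2: "okg V (F \<union> {(a,b),(b,a)} \<union> {(c,d),(d,c)})" by (intro ae(2)[OF fin okr1]) (use fv uV in auto)
  have "(u,v) \<in> (F \<union> {(a,b),(b,a)} \<union> {(c,d),(d,c)})\<^sup>*" by (rule ch3[of u a _ b v]) (use fv gu uV in \<open>auto simp: F_def P\<close>)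
  then have r3: "Kc V (F \<union> {(a,b),(b,a)} \<union> {(c,d),(d,c)}) = Kc V (F \<union> {(a,b),(b,a)} \<union> {(c,d),(d,c)} \<union> {(u,v),(v,u)})"
    by (intro ae_c[OF fin okr2]) (use fv uV in auto)
  have clF': "x \<in> {u,v}" if "(u,x) \<in> F'\<^sup>*" for x
    by (rule rtr_closed[OF _ that]) (use hiu hju fv gu uV in \<open>auto simp: F'_def P\<close>)
  have "(u,a) \<notin> F'\<^sup>*" using clF'[of a] fv by auto
  then have s1: "Kc V F' = Kc V (F' \<union> {(u,a),(a,u)}) + 1" using ae_n[OF fin okF'] fv uV by simp
  have oks1: "okg V (F' \<union> {(u,a),(a,u)})" using ae(2)[OF fin okF'] fv uV by simp
  have "(v,b) \<in> (F' \<union> {(u,a),(a,u)})\<^sup>*" by (rule ch3[of v u _ a b]) (use fv hiu uV in \<open>auto simp: F'_def P\<close>)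
  then have s2: "Kc V (F' \<union> {(u,a),(a,u)}) = Kc V (F' \<union> {(u,a),(a,u)} \<union> {(v,b),(b,v)})"
    by (intro ae_c[OF fin oks1]) (use fv uV in auto)
  have oks2: "okg V (F' \<union> {(u,a),(a,u)} \<union> {(v,b),(b,v)})" by (intro ae(2)[OF fin oks1]) (use fv uV in auto)
  define Nij where "Nij = (if (u,c) \<in> (F' \<union> {(u,a),(a,u)} \<union> {(v,b),(b,v)})\<^sup>* then 0 else 1::nat)"
  have s3: "Kc V (F' \<union> {(u,a),(a,u)} \<union> {(v,b),(b,v)}) = Kc V (F' \<union> {(u,a),(a,u)} \<union> {(v,b),(b,v)} \<union> {(u,c),(c,u)}) + Nij"
    unfolding Nij_def by (intro ae(1)[OF fin oks2]) (use fv uV in auto)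
  have oks3: "okg V (F' \<union> {(u,a),(a,u)} \<union> {(v,b),(b,v)} \<union> {(u,c),(c,u)})" by (intro ae(2)[OF fin oks2]) (use fv uV in auto)
  have "(v,d) \<in> (F' \<union> {(u,a),(a,u)} \<union> {(v,b),(b,v)} \<union> {(u,c),(c,u)})\<^sup>*"
    by (rule ch3[of v u _ c d]) (use fv hiu hju uV in \<open>auto simp: F'_def P\<close>)
  then have s4: "Kc V (F' \<union> {(u,a),(a,u)} \<union> {(v,b),(b,v)} \<union> {(u,c),(c,u)})
      = Kc V (F' \<union> {(u,a),(a,u)} \<union> {(v,b),(b,v)} \<union> {(u,c),(c,u)} \<union> {(v,d),(d,v)})"
    by (intro ae_c[OF fin oks3]) (use fv uV in auto)
  have seq2: "F' \<union> {(u,a),(a,u)} \<union> {(v,b),(b,v)} \<union> {(u,c),(c,u)} \<union> {(v,d),(d,v)}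
     = F \<union> {(a,b),(b,a)} \<union> {(c,d),(d,c)} \<union> {(u,v),(v,u)}"
  proof (intro set_eqI)
    fix pq :: "'a \<times> 'a"
    obtain p q where pqd: "pq = (p,q)" by fastforce
    consider "p = u" | "p = v" | "p \<noteq> u \<and> p \<noteq> v" by blast
    then show "pq \<in> F' \<union> {(u,a),(a,u)} \<union> {(v,b),(b,v)} \<union> {(u,c),(c,u)} \<union> {(v,d),(d,v)} \<longleftrightarrow>
       pq \<in> F \<union> {(a,b),(b,a)} \<union> {(c,d),(d,c)} \<union> {(u,v),(v,u)}"
    proof cases
      case 1 then show ?thesis unfolding pqd F_def F'_def using fv gu hiu hju uV by (auto simp: P)
    next
      case 2 then show ?thesis unfolding pqd F_def F'_def using fv gu hiu hju uV by (auto simp: P)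
    next
      case 3 then show ?thesis unfolding pqd F_def F'_def using fv hiA[of p] hjA[of p] by (auto simp: P)
    qed
  qed
  have NN: "N \<le> Nij"
  proof -
    have "(F' \<union> {(u,a),(a,u)} \<union> {(v,b),(b,v)})\<^sup>* \<subseteq> (E' \<union> {(u,a),(a,u)} \<union> {(v,b),(b,v)})\<^sup>*"
      by (rule rtrancl_mono) (auto simp: E'_def F'_def)
    then show ?thesis unfolding N_def Nij_def by auto
  qed
  define H where "H = Hr V {u,v} hi hj"
  have HF: "H \<subseteq> F" unfolding H_def Hr_def F_def by (auto simp: P)
  have HE': "H \<subseteq> E'"
  proof (rule subrelI)
    fix x y assume "(x,y) \<in> H"
    then consider "x \<in> V" "x \<notin> {u,v}" "hi x \<notin> {u,v}" "y = hi x" | "x \<in> V" "x \<notin> {u,v}" "hj x \<notin> {u,v}" "y = hj x"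
      unfolding H_def Hr_def by blast
    then show "(x,y) \<in> E'"
    proof cases
      case 1
      then have "x \<noteq> a" "x \<noteq> b" using fv by auto
      then have "hi' x = hi x" using hiA[of x] 1 by auto
      then show ?thesis using 1 unfolding E'_def by (auto simp: P)
    next
      case 2
      then have "x \<noteq> c" "x \<noteq> d" using fv by auto
      then have "hj' x = hj x" using hjA[of x] 2 by auto
      then show ?thesis using 2 unfolding E'_def by (auto simp: P)
    qed
  qed
  have Wa: "(a,b) \<in> H\<^sup>* \<or> (a,c) \<in> H\<^sup>* \<or> (a,d) \<in> H\<^sup>*"
  proof (cases "hj a \<in> {u,v}")
    case True
    have "hj (hj a) = a" using inv(2) fv unfolding invol_def by auto
    then have "a = c \<or> a = d" using True gu by auto
    then show ?thesis by auto
  next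
    case False
    obtain z where z: "z \<in> V" "z \<notin> {u,v}" "z \<noteq> a" "hi z \<in> {u,v} \<or> hj z \<in> {u,v}" "(a,z) \<in> H\<^sup>*"
      using walk[OF fin inv(1,2) bp, of a "{u,v}"] fv False unfolding H_def by auto
    have zz: "hi (hi z) = z" "hj (hj z) = z" using inv(1,2) z(1) unfolding invol_def by auto
    have "z = b \<or> z = c \<or> z = d"
    proof -
      have "hi z = u \<longrightarrow> z = a" using zz gu by metis
      moreover have "hi z = v \<longrightarrow> z = b" using zz gu by metis
      moreover have "hj z = u \<longrightarrow> z = c" using zz gu by metis
      moreover have "hj z = v \<longrightarrow> z = d" using zz gu by metis
      ultimately show ?thesis using z(3,4) by auto
    qed
    then show ?thesis using z(5) by auto
  qed
  have key: "N = 1 \<Longrightarrow> e1 = 0"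
  proof -
    assume N1: "N = 1"
    let ?G = "E' \<union> {(u,a),(a,u)} \<union> {(v,b),(b,v)}"
    have HG: "H\<^sup>* \<subseteq> ?G\<^sup>*" using HE' by (intro rtrancl_mono) auto
    have ua: "(u,a) \<in> ?G\<^sup>*" by auto
    have dc: "(d,c) \<in> ?G" using fv hju unfolding E'_def by (auto simp: P)
    have nuc: "(u,c) \<notin> ?G\<^sup>*" using N1 unfolding N_def by (auto split: if_splits)
    from Wa show "e1 = 0"
    proof (elim disjE)
      assume "(a,b) \<in> H\<^sup>*"
      then have "(a,b) \<in> F\<^sup>*" using HF rtrancl_mono by blast
      then show ?thesis unfolding e1_def by simp
    next
      assume "(a,c) \<in> H\<^sup>*"
      then have "(a,c) \<in> ?G\<^sup>*" using HG by blast
      then have "(u,c) \<in> ?G\<^sup>*" using ua by (meson rtrancl_trans)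
      then show ?thesis using nuc by simp
    next
      assume "(a,d) \<in> H\<^sup>*"
      then have "(a,d) \<in> ?G\<^sup>*" using HG by blast
      then have "(u,c) \<in> ?G\<^sup>*" using ua dc by (meson rtrancl_trans rtrancl_into_rtrancl)
      then show ?thesis using nuc by simp
    qed
  qed
  have e1le: "e1 \<le> 1" "N \<le> 1" unfolding e1_def N_def by auto
  have A1: "Kc V E' = Kc V E + N + 1" using q1 q2 q3 q4 q5 q6 seq1 by simp
  have A2: "Kc V F' = Kc V F - e1 + Nij + 1" "e1 \<le> Kc V F" using r1 r2 r3 s1 s2 s3 s4 seq2 by simp_all
  have "2 * N + e1 \<le> Nij + 1" using NN key e1le by (cases "N = 1") auto
  then show ?thesis using A1 A2
    unfolding E_def E'_def F_def F'_def hi'_def hj'_def v_def a_def b_def c_def d_def by simp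
qed




lemma dip_gen:
  assumes "finite V" "u \<in> V" "f u = v" "invol V f" "okg (V - {u,v}) E0"
    "E = E0 \<union> {(u,v),(v,u)}"
  shows "Kc V E = Kc (V - {u,v}) E0 + 1"
proof -
  have v: "v \<in> V" "u \<noteq> v" using assms(2,3,4) unfolding invol_def by auto
  have "V = insert u (insert v (V - {u,v}))" using assms(2) v by auto
  then have "Kc V E = Kc (insert u (insert v (V - {u,v}))) (E0 \<union> {(u,v),(v,u)})" using assms(6) by simp
  also have "\<dots> = Kc (V - {u,v}) E0 + 1"
    by (rule dip) (use assms(1,5) v in \<open>auto simp: okg_def\<close>)
  finally show ?thesis .
qed

lemma dip2:
  assumes "finite V" "invol V f" "invol V g" "u \<in> V" "f u = v" "g u = v"
  shows "Kc V (Pf V f \<union> Pf V g) = Kc (V - {u,v}) (Pf (V - {u,v}) f \<union> Pf (V - {u,v}) g) + 1"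
proof (rule dip_gen[OF assms(1,4,5,2)])
  show "okg (V - {u,v}) (Pf (V - {u,v}) f \<union> Pf (V - {u,v}) g)"
    using dipole_fun(2)[OF assms(2,4,5)] dipole_fun(2)[OF assms(3,4,6)] by (intro okg_Un okg_Pf)
  show "Pf V f \<union> Pf V g = Pf (V - {u, v}) f \<union> Pf (V - {u, v}) g \<union> {(u, v), (v, u)}"
    using dipole_fun(1)[OF assms(2,4,5)] dipole_fun(1)[OF assms(3,4,6)] by auto
qed

lemma dip3:
  assumes "finite V" "invol V f" "invol V g" "invol V h" "u \<in> V" "f u = v" "g u = v" "h u = v"
  shows "Kc V (Pf V f \<union> Pf V g \<union> Pf V h) = Kc (V - {u,v}) (Pf (V - {u,v}) f \<union> Pf (V - {u,v}) g \<union> Pf (V - {u,v}) h) + 1"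
proof (rule dip_gen[OF assms(1,5,6,2)])
  show "okg (V - {u,v}) (Pf (V - {u,v}) f \<union> Pf (V - {u,v}) g \<union> Pf (V - {u,v}) h)"
    using dipole_fun(2)[OF assms(2,5,6)] dipole_fun(2)[OF assms(3,5,7)] dipole_fun(2)[OF assms(4,5,8)]
    by (intro okg_Un okg_Pf)
  show "Pf V f \<union> Pf V g \<union> Pf V h = Pf (V - {u, v}) f \<union> Pf (V - {u, v}) g \<union> Pf (V - {u, v}) h \<union> {(u, v), (v, u)}"
    using dipole_fun(1)[OF assms(2,5,6)] dipole_fun(1)[OF assms(3,5,7)] dipole_fun(1)[OF assms(4,5,8)] by auto
qed

definition Phi :: "'a set \<Rightarrow> ('a \<Rightarrow> 'a) \<Rightarrow> ('a \<Rightarrow> 'a) \<Rightarrow> ('a \<Rightarrow> 'a) \<Rightarrow> bool" where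
  "Phi V f g h \<longleftrightarrow> 2 * (Kc V (Pf V f \<union> Pf V g) + Kc V (Pf V f \<union> Pf V h) + Kc V (Pf V g \<union> Pf V h))
      \<le> card V + 4 * Kc V (Pf V f \<union> Pf V g \<union> Pf V h)"

definition Good :: "'a set \<Rightarrow> 'a set \<Rightarrow> ('a \<Rightarrow> 'a) \<Rightarrow> ('a \<Rightarrow> 'a) \<Rightarrow> ('a \<Rightarrow> 'a) \<Rightarrow> bool" where
  "Good V S f g h \<longleftrightarrow> finite V \<and> invol V f \<and> invol V g \<and> invol V h \<and> bip V S f \<and> bip V S g \<and> bip V S h"

lemma Phi_perm1: "Phi V f g h \<Longrightarrow> Phi V g f h"
  unfolding Phi_def by (simp add: Un_ac)
lemma Phi_perm2: "Phi V f g h \<Longrightarrow> Phi V f h g"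
  unfolding Phi_def by (simp add: Un_ac)
lemma Good_perm1: "Good V S f g h \<Longrightarrow> Good V S g f h" unfolding Good_def by auto
lemma Good_perm2: "Good V S f g h \<Longrightarrow> Good V S f h g" unfolding Good_def by auto

lemma Phi_dip:
  assumes "Good V S f g h" "u \<in> V" "f u = v" "g u = v" "h u = v" "Phi (V - {u,v}) f g h"
  shows "Phi V f g h"
proof -
  have G: "finite V" "invol V f" "invol V g" "invol V h" using assms(1) unfolding Good_def by auto
  have v: "v \<in> V" "u \<noteq> v" using G(2) assms(2,3) unfolding invol_def by auto
  have "card {u,v} \<le> card V" by (rule card_mono) (use G(1) assms(2) v in auto)
  then have c2: "2 \<le> card V" using v by simp
  have c: "card V = card (V - {u,v}) + 2" using G(1) assms(2) v c2
    by (simp add: card_Diff_subset)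
  show ?thesis using assms(6) c
      dip2[OF G(1,2,3) assms(2,3,4)] dip2[OF G(1,2,4) assms(2,3,5)] dip2[OF G(1,3,4) assms(2,4,5)]
      dip3[OF G(1,2,3,4) assms(2,3,4,5)]
    unfolding Phi_def by simp
qed

lemma Good_dip:
  assumes "Good V S f g h" "u \<in> V" "f u = v" "g u = v" "h u = v"
  shows "Good (V - {u,v}) S f g h"
  using assms dipole_fun(2)[of V f u v] dipole_fun(2)[of V g u v] dipole_fun(2)[of V h u v] bip_sub[of V S]
  unfolding Good_def by (metis Diff_subset finite_Diff)

lemma arith_aux:
  fixes a b c n k a' b' c' k' :: nat
  assumes "2 * (a' + b' + c') \<le> n + 4 * k'" "b' = b + 1" "c' = c + 1"
    "2 * int k' + int a \<le> int a' + 2 * int k + 2"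
  shows "2 * (a + b + c) \<le> n + 4 * k"
  using assms by presburger

lemma red:
  assumes IH: "\<And>W f g h. card W < card V \<Longrightarrow> Good W S f g h \<Longrightarrow> Phi W f g h"
    and G: "Good V S hi hj g" and uV: "u \<in> V" and ne: "hi u \<noteq> g u" "hj u \<noteq> g u"
  shows "Phi V hi hj g"
proof -
  have GG: "finite V" "invol V hi" "invol V hj" "invol V g" "bip V S hi" "bip V S hj" "bip V S g"
    using G unfolding Good_def by auto
  define hi' where "hi' = sw u (g u) (hi u) (hi (g u)) hi"
  define hj' where "hj' = sw u (g u) (hj u) (hj (g u)) hj"
  have G': "Good V S hi' hj' g" unfolding Good_def hi'_def hj'_def
    using GG uV ne sw_invol sw_bip by metis
  have u': "hi' u = g u" "hj' u = g u" unfolding hi'_def hj'_def by (auto intro: sw_u)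
  have v: "g u \<in> V" "u \<noteq> g u" using GG(4) uV unfolding invol_def by auto
  have "card (V - {u, g u}) < card V" by (rule psubset_card_mono) (use GG(1) uV in auto)
  then have "Phi (V - {u, g u}) hi' hj' g" using IH Good_dip[OF G' uV u'] by blast
  then have P': "Phi V hi' hj' g" using Phi_dip[OF G' uV u'] by blast
  have s1: "Kc V (Pf V hi' \<union> Pf V g) = Kc V (Pf V hi \<union> Pf V g) + 1"
    unfolding hi'_def by (rule side[OF GG(1,2,4) uV ne(1)])
  have s2: "Kc V (Pf V hj' \<union> Pf V g) = Kc V (Pf V hj \<union> Pf V g) + 1"
    unfolding hj'_def by (rule side[OF GG(1,3,4) uV ne(2)])
  have m: "2 * int (Kc V (Pf V hi' \<union> Pf V hj' \<union> Pf V g)) + int (Kc V (Pf V hi \<union> Pf V hj))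
       \<le> int (Kc V (Pf V hi' \<union> Pf V hj')) + 2 * int (Kc V (Pf V hi \<union> Pf V hj \<union> Pf V g)) + 2"
    unfolding hi'_def hj'_def by (rule mid[OF GG(1-4) GG(5,6) uV ne])
  show ?thesis unfolding Phi_def by (rule arith_aux[OF P'[unfolded Phi_def] s1 s2 m])
qed

lemma main:
  "Good V S f g h \<Longrightarrow> Phi V f g h"
proof (induction "card V" arbitrary: V f g h rule: less_induct)
  case less
  have fin: "finite V" using less.prems unfolding Good_def by auto
  show ?case
  proof (cases "V = {}")
    case True then show ?thesis unfolding Phi_def Kc_def by simp
  next
    case False
    then obtain u where uV: "u \<in> V" by auto
    have IH: "\<And>W f g h. card W < card V \<Longrightarrow> Good W S f g h \<Longrightarrow> Phi W f g h" using less.hyps by blast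
    consider "f u = h u \<and> g u = h u" | "f u \<noteq> h u \<and> g u \<noteq> h u" | "f u = h u \<and> g u \<noteq> h u" | "f u \<noteq> h u \<and> g u = h u"
      by blast
    then show ?thesis
    proof cases
      case 1
      have v: "h u \<in> V" "u \<noteq> h u" using less.prems uV unfolding Good_def invol_def by auto
      have "card (V - {u, h u}) < card V" by (rule psubset_card_mono) (use fin uV in auto)
      then have "Phi (V - {u, h u}) f g h" using IH Good_dip[OF less.prems uV] 1 by blast
      then show ?thesis using Phi_dip[OF less.prems uV] 1 by blast
    next
      case 2 then show ?thesis using red[OF IH less.prems uV] by blast
    next
      case 3
      have "Phi V f h g" using red[OF IH Good_perm2[OF less.prems] uV] 3 by metis
      then show ?thesis by (rule Phi_perm2)
    next
      case 4
      have G2: "Good V S g h f" using Good_perm2[OF Good_perm1[OF less.prems]] .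
      have "Phi V g h f" using red[OF IH G2 uV] 4 by metis
      then show ?thesis using Phi_perm1 Phi_perm2 by metis
    qed
  qed
qed


lemma er2: "edge_rel n m {i,j} = Pf {1..n} (m i) \<union> Pf {1..n} (m j)"
  unfolding edge_rel_def Pf_def by auto

lemma er3: "edge_rel n m {i,j,k} = Pf {1..n} (m i) \<union> Pf {1..n} (m j) \<union> Pf {1..n} (m k)"
  unfolding edge_rel_def Pf_def by auto

lemma kap: "kappa n m J = Kc {1..n} (edge_rel n m J)"
  unfolding kappa_def Kc_def ..

theorem lemma1:
  fixes d n :: nat and m :: "nat \<Rightarrow> nat \<Rightarrow> nat" and I :: "nat set"
  assumes "colourful d n m"
    and "I \<subseteq> {1..d+1}" and "card I = 3"
    and "disjoint_union_of_2spheres (complex_X n m I)"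
  shows "\<exists>i\<in>I. \<exists>j\<in>I. i \<noteq> j \<and>
           real (kappa n m {i, j}) - real (kappa n m I) \<le> real n / 6"
proof -
  obtain i j k where I: "I = {i,j,k}" "i \<noteq> j" "j \<noteq> k" "i \<noteq> k"
    using assms(3) card_3_iff by metis
  have col: "\<forall>c\<in>{1..d+1}. \<forall>v\<in>{1..n}. m c v \<in> {1..n} \<and> m c v \<noteq> v \<and> m c (m c v) = v"
    using assms(1) unfolding colourful_def by blast
  obtain S where S: "\<forall>c\<in>{1..d+1}. \<forall>v\<in>{1..n}. (v \<in> S \<longleftrightarrow> m c v \<notin> S)"
    using assms(1) unfolding colourful_def by blast
  have cI: "i \<in> {1..d+1}" "j \<in> {1..d+1}" "k \<in> {1..d+1}" using assms(2) I by auto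
  have inv: "invol {1..n} (m c)" if "c \<in> {1..d+1}" for c
    using col that unfolding invol_def by blast
  have bp: "bip {1..n} S (m c)" if "c \<in> {1..d+1}" for c
    using S that unfolding bip_def by blast
  have "Good {1..n} S (m i) (m j) (m k)"
    unfolding Good_def using inv bp cI by auto
  then have P: "Phi {1..n} (m i) (m j) (m k)" by (rule main)
  define A where "A = kappa n m {i,j}"
  define B where "B = kappa n m {i,k}"
  define C where "C = kappa n m {j,k}"
  define K where "K = kappa n m I"
  have P2: "2 * (A + B + C) \<le> n + 4 * K"
    using P unfolding Phi_def A_def B_def C_def K_def kap er2 I er3 by simp
  show ?thesis
  proof (rule ccontr)
    assume "\<not> ?thesis"
    then have "real A - real K > real n / 6" "real B - real K > real n / 6" "real C - real K > real n / 6"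
      unfolding A_def B_def C_def K_def using I by auto
    moreover have "2 * (real A + real B + real C) \<le> real n + 4 * real K"
      using P2 by (metis (mono_tags, opaque_lifting) of_nat_add of_nat_le_iff of_nat_mult of_nat_numeral)
    moreover have "real K \<ge> 0" by simp
    ultimately show False by argo
  qed
qed

end
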